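(* Let $\rho\in\Delta_{|\mathcal S|}$ and let $\pi,\pi'$ be policies. Define $\underline L_{\rho,\pi'}(v):=\min_{x\in X(\rho,\pi')}L_{\rho,\pi'}(x,v)$, where $$L_{\rho,\pi'}(x,v):=\langle c,x\rangle+\sum_{s\in\mathcal S}\eta^{\pi'}_\rho(s)\,\bar h^{x(\cdot,s)}(s)+\langle v,\rho-(\hat I-\gamma P)^Tx\rangle .$$ Then, with $V^\pi\in\mathbb R^{|\mathcal S|}$ the value function of $\pi$, $$\underline L_{\rho,\pi'}(V^\pi)=\langle V^\pi,\rho\rangle-\sum_{s\in\mathcal S}\eta^{\pi'}_\rho(s)\cdot\max_{p\in\Delta_{|\mathcal A|}}\{-\psi^\pi(s,p)\}.$$
   Context: An infinite-horizon discounted MDP: finite $\mathcal S$, $\mathcal A$, transition probabilities $\mathcal P(s'\mid s,a)$, cost $c$, discount $\gamma\in[0,1)$. A policy assigns $\pi(\cdot\mid s)\in\Delta_{|\mathcal A|}$ (probability simplex) to each state. For each $s$, $p\mapsto h^p(s)$ is a closed convex function on $\Delta_{|\mathcal A|}$. $V^\pi(s)=\mathbb E[\sum_{t\ge0}\gamma^t(c(s_t,a_t)+h^{\pi(\cdot\mid s_t)}(s_t))\mid s_0=s,\ a_t\sim\pi(\cdot\mid s_t),\ s_{t+1}\sim\mathcal P(\cdot\mid s_t,a_t)]$, $Q^\pi(s,a)$ the same with $a_0=a$; the advantage function is $\psi^\pi(s,p):=\langle Q^\pi(s,\cdot),p\rangle-V^\pi(s)+h^p(s)-h^{\pi(\cdot\mid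 s)}(s)$. Visitation: $\kappa^\pi_q(s):=(1-\gamma)\sum_{t\ge0}\gamma^t\Pr^\pi\{s_t=s\mid s_0=q\}$ and $\eta^\pi_\rho(s):=(1-\gamma)^{-1}\sum_q\rho(q)\kappa^\pi_q(s)$. Vectors $x\in\mathbb R^{|\mathcal A|\times|\mathcal S|}$ have entries $x(a,s)$ and $\langle c,x\rangle=\sum_{s,a}c(s,a)x(a,s)$; $(\hat I-\gamma P)^Tx$ is the vector in $\mathbb R^{|\mathcal S|}$ with entries $\sum_a x(a,s)-\gamma\sum_{s',a}\mathcal P(s\mid s',a)x(a,s')$ (so $\langle v,(\hat I-\gamma P)^Tx\rangle=\sum_{s,a}x(a,s)[v(s)-\gamma\sum_{s'}\mathcal P(s'\mid s,a)v(s')]$). $X(\rho,\pi'):=\{x\ge0:\sum_{a}x(a,s)=\eta^{\pi'}_\rho(s)\ \forall s\}$. For $x\in X(\rho,\pi')$, $\bar h^{x(\cdot,s)}(s):=h^{u(\cdot,s)}(s)$ with $u(\cdot,s)=x(\cdot,s)/\sum_a x(a,s)$. *)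

theory Defs
  imports "HOL-Analysis.Analysis"
begin

(* Transition kernel  P s a s' = P(s' | s,a);  cost  c s a;
   regulariser  h s p = h^p(s)  for p in the action simplex;
   policy  pol s = pol(. | s) :: real^'a. *)

definition act_simplex :: "(real^'a::finite) set" where
  "act_simplex = {p. (\<forall>a. 0 \<le> p $ a) \<and> (\<Sum>a\<in>UNIV. p $ a) = 1}"

definition closed_fun_on :: "(real^'a::finite) set \<Rightarrow> (real^'a \<Rightarrow> real) \<Rightarrow> bool" where
  "closed_fun_on S f \<longleftrightarrow> closed {(p, t). p \<in> S \<and> f p \<le> t}"

definition is_policy :: "('s::finite \<Rightarrow> real^'a::finite) \<Rightarrow> bool" where
  "is_policy pol \<longleftrightarrow> (\<forall>s. pol s \<in> act_simplex)"

definition is_distribution :: "('s::finite \<Rightarrow> real) \<Rightarrow> bool" where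
  "is_distribution rho \<longleftrightarrow> (\<forall>s. 0 \<le> rho s) \<and> (\<Sum>s\<in>UNIV. rho s) = 1"

definition Ppol :: "('s::finite \<Rightarrow> 'a::finite \<Rightarrow> 's \<Rightarrow> real) \<Rightarrow> ('s \<Rightarrow> real^'a) \<Rightarrow> 's \<Rightarrow> 's \<Rightarrow> real" where
  "Ppol P pol s s' = (\<Sum>a\<in>UNIV. pol s $ a * P s a s')"

(* t-step probability  Pr^pol { s_t = s' | s_0 = s } *)
fun pstep :: "('s::finite \<Rightarrow> 'a::finite \<Rightarrow> 's \<Rightarrow> real) \<Rightarrow> ('s \<Rightarrow> real^'a) \<Rightarrow> nat \<Rightarrow> 's \<Rightarrow> 's \<Rightarrow> real" where
  "pstep P pol 0 s s' = (if s = s' then 1 else 0)"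
| "pstep P pol (Suc t) s s' = (\<Sum>s1\<in>UNIV. pstep P pol t s s1 * Ppol P pol s1 s')"

definition cpol :: "('s::finite \<Rightarrow> 'a::finite \<Rightarrow> real) \<Rightarrow> ('s \<Rightarrow> real^'a \<Rightarrow> real) \<Rightarrow> ('s \<Rightarrow> real^'a) \<Rightarrow> 's \<Rightarrow> real" where
  "cpol c h pol s = (\<Sum>a\<in>UNIV. pol s $ a * c s a) + h s (pol s)"

(* V^pol(s) = E[ sum_t gamma^t (c(s_t,a_t) + h^{pol(.|s_t)}(s_t)) | s_0 = s ] *)
definition Vfun :: "('s::finite \<Rightarrow> 'a::finite \<Rightarrow> 's \<Rightarrow> real) \<Rightarrow> ('s \<Rightarrow> 'a \<Rightarrow> real) \<Rightarrow> ('s \<Rightarrow> real^'a \<Rightarrow> real) \<Rightarrow> real \<Rightarrow> ('s \<Rightarrow> real^'a) \<Rightarrow> 's \<Rightarrow> real" where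
  "Vfun P c h \<gamma> pol s = (\<Sum>t. \<gamma> ^ t * (\<Sum>s'\<in>UNIV. pstep P pol t s s' * cpol c h pol s'))"

(* Q^pol(s,a): same with a_0 = a; for t >= 1,
   Pr{s_t = s' | s_0 = s, a_0 = a} = sum_{s1} P(s1|s,a) Pr^pol{s_{t-1} = s' | s_0 = s1} *)
definition Qfun :: "('s::finite \<Rightarrow> 'a::finite \<Rightarrow> 's \<Rightarrow> real) \<Rightarrow> ('s \<Rightarrow> 'a \<Rightarrow> real) \<Rightarrow> ('s \<Rightarrow> real^'a \<Rightarrow> real) \<Rightarrow> real \<Rightarrow> ('s \<Rightarrow> real^'a) \<Rightarrow> 's \<Rightarrow> 'a \<Rightarrow> real" where
  "Qfun P c h \<gamma> pol s a = c s a + h s (pol s) +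
     (\<Sum>t. \<gamma> ^ Suc t * (\<Sum>s'\<in>UNIV. (\<Sum>s1\<in>UNIV. P s a s1 * pstep P pol t s1 s') * cpol c h pol s'))"

definition psi :: "('s::finite \<Rightarrow> 'a::finite \<Rightarrow> 's \<Rightarrow> real) \<Rightarrow> ('s \<Rightarrow> 'a \<Rightarrow> real) \<Rightarrow> ('s \<Rightarrow> real^'a \<Rightarrow> real) \<Rightarrow> real \<Rightarrow> ('s \<Rightarrow> real^'a) \<Rightarrow> 's \<Rightarrow> real^'a \<Rightarrow> real" where
  "psi P c h \<gamma> pol s p = (\<Sum>a\<in>UNIV. Qfun P c h \<gamma> pol s a * p $ a) - Vfun P c h \<gamma> pol s + h s p - h s (pol s)"

definition kappa :: "('s::finite \<Rightarrow> 'a::finite \<Rightarrow> 's \<Rightarrow> real) \<Rightarrow> real \<Rightarrow> ('s \<Rightarrow> real^'a) \<Rightarrow> 's \<Rightarrow> 's \<Rightarrow> real" where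
  "kappa P \<gamma> pol q s = (1 - \<gamma>) * (\<Sum>t. \<gamma> ^ t * pstep P pol t q s)"

definition eta :: "('s::finite \<Rightarrow> 'a::finite \<Rightarrow> 's \<Rightarrow> real) \<Rightarrow> real \<Rightarrow> ('s \<Rightarrow> real^'a) \<Rightarrow> ('s \<Rightarrow> real) \<Rightarrow> 's \<Rightarrow> real" where
  "eta P \<gamma> pol rho s = inverse (1 - \<gamma>) * (\<Sum>q\<in>UNIV. rho q * kappa P \<gamma> pol q s)"

(* x(a,s) = x s $ a *)
definition Xset :: "('s::finite \<Rightarrow> 'a::finite \<Rightarrow> 's \<Rightarrow> real) \<Rightarrow> real \<Rightarrow> ('s \<Rightarrow> real) \<Rightarrow> ('s \<Rightarrow> real^'a) \<Rightarrow> ('s \<Rightarrow> real^'a) set" where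
  "Xset P \<gamma> rho pol' = {x. (\<forall>s a. 0 \<le> x s $ a) \<and> (\<forall>s. (\<Sum>a\<in>UNIV. x s $ a) = eta P \<gamma> pol' rho s)}"

definition hbar :: "('s \<Rightarrow> real^'a::finite \<Rightarrow> real) \<Rightarrow> ('s \<Rightarrow> real^'a) \<Rightarrow> 's \<Rightarrow> real" where
  "hbar h x s = h s (\<chi> a. x s $ a / (\<Sum>b\<in>UNIV. x s $ b))"

definition cx :: "('s::finite \<Rightarrow> 'a::finite \<Rightarrow> real) \<Rightarrow> ('s \<Rightarrow> real^'a) \<Rightarrow> real" where
  "cx c x = (\<Sum>s\<in>UNIV. \<Sum>a\<in>UNIV. c s a * x s $ a)"

(* (I^ - gamma P)^T x  as a vector on states *)
definition flowT :: "('s::finite \<Rightarrow> 'a::finite \<Rightarrow> 's \<Rightarrow> real) \<Rightarrow> real \<Rightarrow> ('s \<Rightarrow> real^'a) \<Rightarrow> 's \<Rightarrow> real" where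
  "flowT P \<gamma> x s = (\<Sum>a\<in>UNIV. x s $ a) - \<gamma> * (\<Sum>s'\<in>UNIV. \<Sum>a\<in>UNIV. P s' a s * x s' $ a)"

definition Lag :: "('s::finite \<Rightarrow> 'a::finite \<Rightarrow> 's \<Rightarrow> real) \<Rightarrow> ('s \<Rightarrow> 'a \<Rightarrow> real) \<Rightarrow> ('s \<Rightarrow> real^'a \<Rightarrow> real) \<Rightarrow> real \<Rightarrow> ('s \<Rightarrow> real) \<Rightarrow> ('s \<Rightarrow> real^'a) \<Rightarrow> ('s \<Rightarrow> real^'a) \<Rightarrow> ('s \<Rightarrow> real) \<Rightarrow> real" where
  "Lag P c h \<gamma> rho pol' x v = cx c x + (\<Sum>s\<in>UNIV. eta P \<gamma> pol' rho s * hbar h x s)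
      + (\<Sum>s\<in>UNIV. v s * (rho s - flowT P \<gamma> x s))"

definition Lunder :: "('s::finite \<Rightarrow> 'a::finite \<Rightarrow> 's \<Rightarrow> real) \<Rightarrow> ('s \<Rightarrow> 'a \<Rightarrow> real) \<Rightarrow> ('s \<Rightarrow> real^'a \<Rightarrow> real) \<Rightarrow> real \<Rightarrow> ('s \<Rightarrow> real) \<Rightarrow> ('s \<Rightarrow> real^'a) \<Rightarrow> ('s \<Rightarrow> real) \<Rightarrow> real" where
  "Lunder P c h \<gamma> rho pol' v = (INF x\<in>Xset P \<gamma> rho pol'. Lag P c h \<gamma> rho pol' x v)"

end

theory Submission
  imports Defs
begin


lemma epi_lsc:
  fixes f :: "'b::metric_space \<Rightarrow> real"
  assumes cl: "closed {(p, t). p \<in> S \<and> f p \<le> t}"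
    and lim: "q \<longlonglongrightarrow> l" and ev: "eventually (\<lambda>n. q n \<in> S \<and> f (q n) \<le> t) sequentially"
  shows "l \<in> S \<and> f l \<le> t"
proof -
  have "(l, t) \<in> {(p, t). p \<in> S \<and> f p \<le> t}"
    by (rule Lim_in_closed_set[OF cl _ _ tendsto_Pair[OF lim tendsto_const]])
       (use ev in \<open>auto elim: eventually_mono\<close>)
  then show ?thesis by simp
qed

lemma epi_min:
  fixes f :: "'b::metric_space \<Rightarrow> real"
  assumes cl: "closed {(p, t). p \<in> S \<and> f p \<le> t}"
    and cp: "compact S" and ne: "S \<noteq> {}"
  shows "\<exists>p\<in>S. \<forall>q\<in>S. f p \<le> f q"
proof -
  have sc: "seq_compact S" using cp compact_imp_seq_compact by blast
  have bdd: "\<exists>B. \<forall>q\<in>S. B \<le> f q"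
  proof (rule ccontr)
    assume "\<not> ?thesis"
    then have "\<forall>n::nat. \<exists>q\<in>S. f q < - real n" by (meson not_le)
    then obtain q where q: "\<And>n. q n \<in> S" "\<And>n. f (q n) < - real n" by metis
    then obtain l r where l: "l \<in> S" "strict_mono r" "(q \<circ> r) \<longlonglongrightarrow> l"
      using sc unfolding seq_compact_def by metis
    obtain N :: nat where N: "1 - f l \<le> real N" using real_arch_simple by blast
    have "eventually (\<lambda>n. (q \<circ> r) n \<in> S \<and> f ((q \<circ> r) n) \<le> f l - 1) sequentially"
    proof (rule eventually_sequentiallyI[of N])
      fix n assume "N \<le> n"
      moreover have "n \<le> r n" using seq_suble[OF l(2)] .
      ultimately have "real N \<le> real (r n)" by simp
      then show "(q \<circ> r) n \<in> S \<and> f ((q \<circ> r) n) \<le> f l - 1" using q[of "r n"] N by auto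
    qed
    from epi_lsc[OF cl l(3) this] show False by simp
  qed
  then obtain B where B: "\<And>q. q \<in> S \<Longrightarrow> B \<le> f q" by blast
  define m where "m = Inf (f ` S)"
  have bb: "bdd_below (f ` S)" using B by (auto intro!: bdd_belowI2)
  have mle: "\<And>q. q \<in> S \<Longrightarrow> m \<le> f q" unfolding m_def by (rule cInf_lower[OF _ bb]) simp
  have "\<forall>n::nat. \<exists>q\<in>S. f q < m + 1 / (real n + 1)"
  proof
    fix n :: nat
    have "Inf (f ` S) < m + 1 / (real n + 1)" unfolding m_def by (simp add: add_pos_pos)
    moreover have "f ` S \<noteq> {}" using ne by simp
    ultimately obtain y where "y \<in> f ` S" "y < m + 1 / (real n + 1)" using cInf_lessD by metis
    then show "\<exists>q\<in>S. f q < m + 1 / (real n + 1)" by auto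
  qed
  then obtain q where q: "\<And>n. q n \<in> S" "\<And>n. f (q n) < m + 1 / (real n + 1)" by metis
  then obtain l r where l: "l \<in> S" "strict_mono r" "(q \<circ> r) \<longlonglongrightarrow> l"
    using sc unfolding seq_compact_def by metis
  have "f l \<le> m + e" if e: "e > 0" for e
  proof -
    obtain N :: nat where N: "1 / e \<le> real N" using real_arch_simple by blast
    have "eventually (\<lambda>n. (q \<circ> r) n \<in> S \<and> f ((q \<circ> r) n) \<le> m + e) sequentially"
    proof (rule eventually_sequentiallyI[of N])
      fix n assume "N \<le> n"
      moreover have "n \<le> r n" using seq_suble[OF l(2)] .
      ultimately have "real N \<le> real (r n)" by simp
      then have "1 / e < real (r n) + 1" using N by linarith
      then have "1 < (real (r n) + 1) * e" using e by (simp add: divide_less_eq)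
      then have "1 / (real (r n) + 1) < e" by (simp add: divide_less_eq mult.commute)
      then show "(q \<circ> r) n \<in> S \<and> f ((q \<circ> r) n) \<le> m + e" using q[of "r n"] by auto
    qed
    from epi_lsc[OF cl l(3) this] show ?thesis by simp
  qed
  then have "f l \<le> m" by (meson field_le_epsilon)
  then show ?thesis using l(1) mle by (meson order.trans)
qed



lemma Ppol_props:
  assumes P_nonneg: "\<And>s a s'. 0 \<le> P s a s'" and P_sum: "\<And>s a. (\<Sum>s'\<in>UNIV. P s a s') = 1"
    and pol: "is_policy pol"
  shows "0 \<le> Ppol P pol s s'" "(\<Sum>s'\<in>UNIV. Ppol P pol s s') = 1"
proof -
  have pa: "\<And>a. 0 \<le> pol s $ a" "(\<Sum>a\<in>UNIV. pol s $ a) = 1"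
    using pol unfolding is_policy_def act_simplex_def by auto
  show "0 \<le> Ppol P pol s s'" unfolding Ppol_def
    by (intro sum_nonneg mult_nonneg_nonneg pa P_nonneg)
  have "(\<Sum>s'\<in>UNIV. Ppol P pol s s') = (\<Sum>a\<in>UNIV. pol s $ a * (\<Sum>s'\<in>UNIV. P s a s'))"
  proof -
    have "(\<Sum>s'\<in>UNIV. Ppol P pol s s') = (\<Sum>s'\<in>UNIV. \<Sum>a\<in>UNIV. pol s $ a * P s a s')"
      unfolding Ppol_def by simp
    also have "\<dots> = (\<Sum>a\<in>UNIV. \<Sum>s'\<in>UNIV. pol s $ a * P s a s')" by (rule sum.swap)
    also have "\<dots> = (\<Sum>a\<in>UNIV. pol s $ a * (\<Sum>s'\<in>UNIV. P s a s'))" by (simp add: sum_distrib_left)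
    finally show ?thesis .
  qed
  also have "\<dots> = 1" using pa by (simp add: P_sum)
  finally show "(\<Sum>s'\<in>UNIV. Ppol P pol s s') = 1" .
qed

lemma pstep_props:
  assumes P_nonneg: "\<And>s a s'. 0 \<le> P s a s'" and P_sum: "\<And>s a. (\<Sum>s'\<in>UNIV. P s a s') = 1"
    and pol: "is_policy pol"
  shows "(\<forall>s'. 0 \<le> pstep P pol t s s') \<and> (\<Sum>s'\<in>UNIV. pstep P pol t s s') = 1"
proof (induction t)
  case 0
  then show ?case by simp
next
  case (Suc t)
  note pp = Ppol_props[OF P_nonneg P_sum pol]
  have "\<forall>s'. 0 \<le> pstep P pol (Suc t) s s'"
    using Suc pp by (auto intro!: sum_nonneg mult_nonneg_nonneg)
  moreover have "(\<Sum>s'\<in>UNIV. pstep P pol (Suc t) s s') = (\<Sum>s1\<in>UNIV. pstep P pol t s s1 * (\<Sum>s'\<in>UNIV. Ppol P pol s1 s'))"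
    by (simp add: sum_distrib_left) (rule sum.swap)
  moreover have "\<dots> = 1" using Suc pp by simp
  ultimately show ?case by simp
qed

lemma pstep_le1:
  fixes P :: "'s::finite \<Rightarrow> 'a::finite \<Rightarrow> 's \<Rightarrow> real" and t :: nat
  assumes P_nonneg: "\<And>s a s'. 0 \<le> P s a s'" and P_sum: "\<And>s a. (\<Sum>s'\<in>UNIV. P s a s') = 1"
    and pol: "is_policy pol"
  shows "pstep P pol t s s' \<le> 1"
proof -
  note pp = pstep_props[OF P_nonneg P_sum pol, where t=t and s=s]
  have "pstep P pol t s s' \<le> (\<Sum>s'\<in>UNIV. pstep P pol t s s')"
    by (rule member_le_sum) (use pp in auto)
  then show ?thesis using pp by simp
qed

lemma summable_geo_bound:
  fixes \<gamma> :: real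
  assumes "0 \<le> \<gamma>" "\<gamma> < 1" "\<And>t. \<bar>f t\<bar> \<le> K"
  shows "summable (\<lambda>t. \<gamma> ^ t * f t)"
proof (rule summable_comparison_test)
  show "\<exists>N. \<forall>n\<ge>N. norm (\<gamma> ^ n * f n) \<le> K * \<gamma> ^ n"
    using assms by (auto simp: abs_mult mult.commute intro!: mult_right_mono)
  show "summable (\<lambda>n. K * \<gamma> ^ n)" using assms by (intro summable_mult summable_geometric) simp
qed

lemma summable_pstep_sum:
  fixes \<gamma> :: real
  assumes P_nonneg: "\<And>s a s'. 0 \<le> P s a s'" and P_sum: "\<And>s a. (\<Sum>s'\<in>UNIV. P s a s') = 1"
    and pol: "is_policy pol" and g: "0 \<le> \<gamma>" "\<gamma> < 1"
  shows "summable (\<lambda>t. \<gamma> ^ t * (\<Sum>s'\<in>UNIV. pstep P pol t s s' * f s'))"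
proof (rule summable_geo_bound[OF g])
  fix t
  have "\<bar>\<Sum>s'\<in>UNIV. pstep P pol t s s' * f s'\<bar> \<le> (\<Sum>s'\<in>UNIV. \<bar>pstep P pol t s s' * f s'\<bar>)"
    by (rule sum_abs)
  also have "\<dots> \<le> (\<Sum>s'\<in>UNIV. \<bar>f s'\<bar>)"
  proof (rule sum_mono)
    fix s'
    have "0 \<le> pstep P pol t s s'" "pstep P pol t s s' \<le> 1"
      using pstep_props[OF P_nonneg P_sum pol] pstep_le1[OF P_nonneg P_sum pol] by auto
    then show "\<bar>pstep P pol t s s' * f s'\<bar> \<le> \<bar>f s'\<bar>"
      by (simp add: abs_mult mult_left_le_one_le)
  qed
  finally show "\<bar>\<Sum>s'\<in>UNIV. pstep P pol t s s' * f s'\<bar> \<le> (\<Sum>s'\<in>UNIV. \<bar>f s'\<bar>)" .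
qed

lemma Q_eq:
  fixes \<gamma> :: real
  assumes P_nonneg: "\<And>s a s'. 0 \<le> P s a s'" and P_sum: "\<And>s a. (\<Sum>s'\<in>UNIV. P s a s') = 1"
    and pol: "is_policy pol" and g: "0 \<le> \<gamma>" "\<gamma> < 1"
  shows "Qfun P c h \<gamma> pol s a = c s a + h s (pol s) + \<gamma> * (\<Sum>s1\<in>UNIV. P s a s1 * Vfun P c h \<gamma> pol s1)"
proof -
  define A where "A t s1 = \<gamma> ^ t * (\<Sum>s'\<in>UNIV. pstep P pol t s1 s' * cpol c h pol s')" for t s1
  have sA: "summable (\<lambda>t. A t s1)" for s1
    unfolding A_def by (rule summable_pstep_sum[OF P_nonneg P_sum pol g])
  have pw: "\<gamma> ^ Suc t * (\<Sum>s'\<in>UNIV. (\<Sum>s1\<in>UNIV. P s a s1 * pstep P pol t s1 s') * cpol c h pol s')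
      = (\<Sum>s1\<in>UNIV. \<gamma> * P s a s1 * A t s1)" for t
  proof -
    have "(\<Sum>s'\<in>UNIV. (\<Sum>s1\<in>UNIV. P s a s1 * pstep P pol t s1 s') * cpol c h pol s')
        = (\<Sum>s'\<in>UNIV. \<Sum>s1\<in>UNIV. P s a s1 * (pstep P pol t s1 s' * cpol c h pol s'))"
      by (simp add: sum_distrib_right mult.assoc)
    also have "\<dots> = (\<Sum>s1\<in>UNIV. \<Sum>s'\<in>UNIV. P s a s1 * (pstep P pol t s1 s' * cpol c h pol s'))"
      by (rule sum.swap)
    also have "\<dots> = (\<Sum>s1\<in>UNIV. P s a s1 * (\<Sum>s'\<in>UNIV. pstep P pol t s1 s' * cpol c h pol s'))"
      by (simp add: sum_distrib_left)
    finally show ?thesis unfolding A_def by (simp add: sum_distrib_left mult_ac)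
  qed
  have "(\<Sum>t. \<gamma> ^ Suc t * (\<Sum>s'\<in>UNIV. (\<Sum>s1\<in>UNIV. P s a s1 * pstep P pol t s1 s') * cpol c h pol s'))
      = (\<Sum>t. \<Sum>s1\<in>UNIV. \<gamma> * P s a s1 * A t s1)" by (simp only: pw)
  also have "\<dots> = (\<Sum>s1\<in>UNIV. \<Sum>t. \<gamma> * P s a s1 * A t s1)"
    by (rule suminf_sum) (intro summable_mult sA)
  also have "\<dots> = (\<Sum>s1\<in>UNIV. \<gamma> * P s a s1 * (\<Sum>t. A t s1))"
    by (intro sum.cong refl suminf_mult sA)
  also have "\<dots> = \<gamma> * (\<Sum>s1\<in>UNIV. P s a s1 * Vfun P c h \<gamma> pol s1)"
    unfolding A_def Vfun_def by (simp add: sum_distrib_left mult_ac)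
  finally show ?thesis unfolding Qfun_def by simp
qed

lemma eta_nonneg:
  fixes \<gamma> :: real
  assumes P_nonneg: "\<And>s a s'. 0 \<le> P s a s'" and P_sum: "\<And>s a. (\<Sum>s'\<in>UNIV. P s a s') = 1"
    and pol: "is_policy pol" and g: "0 \<le> \<gamma>" "\<gamma> < 1" and rho: "is_distribution rho"
  shows "0 \<le> eta P \<gamma> pol rho s"
proof -
  have "0 \<le> kappa P \<gamma> pol q s" for q
  proof -
    have "summable (\<lambda>t. \<gamma> ^ t * pstep P pol t q s)"
      by (rule summable_geo_bound[OF g, where K=1])
         (use pstep_props[OF P_nonneg P_sum pol] pstep_le1[OF P_nonneg P_sum pol] in auto)
    then have "0 \<le> (\<Sum>t. \<gamma> ^ t * pstep P pol t q s)"
      by (rule suminf_nonneg) (use pstep_props[OF P_nonneg P_sum pol] g in auto)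
    then show ?thesis unfolding kappa_def using g by simp
  qed
  then show ?thesis unfolding eta_def using g rho unfolding is_distribution_def
    by (auto intro!: mult_nonneg_nonneg sum_nonneg)
qed

lemma simplex_compact: "compact (act_simplex :: (real^'a::finite) set)"
unfolding compact_eq_bounded_closed
proof (intro conjI)
  show "bounded (act_simplex :: (real^'a) set)" unfolding bounded_iff
  proof (intro exI ballI)
    fix x :: "real^'a" assume "x \<in> act_simplex"
    then have "(\<Sum>i\<in>UNIV. \<bar>x$i\<bar>) = 1" unfolding act_simplex_def by simp
    then show "norm x \<le> 1" using norm_le_l1_cart[of x] by simp
  qed
  show "closed (act_simplex :: (real^'a) set)" unfolding act_simplex_def
    by (intro closed_Collect_conj closed_Collect_all closed_Collect_le closed_Collect_eq continuous_intros)
qed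



lemma arith1: "(X::real) = e * w \<Longrightarrow> X * (q - hp - v) = e * (w * q) - (e * hp) * w - (e * v) * w"
  by (simp add: algebra_simps)

lemma arith2: "(e::real) * q - e * hp - e * v + e * hu = e * (q - v + hu - hp)"
  by (simp add: algebra_simps)

theorem lemma2p6:
  fixes P :: "'s::finite \<Rightarrow> 'a::finite \<Rightarrow> 's \<Rightarrow> real"
    and c :: "'s \<Rightarrow> 'a \<Rightarrow> real"
    and h :: "'s \<Rightarrow> real^'a \<Rightarrow> real"
    and \<gamma> :: real
    and rho :: "'s \<Rightarrow> real"
    and pol pol' :: "'s \<Rightarrow> real^'a"
  assumes gamma: "0 \<le> \<gamma>" "\<gamma> < 1"
    and P_nonneg: "\<And>s a s'. 0 \<le> P s a s'"
    and P_sum: "\<And>s a. (\<Sum>s'\<in>UNIV. P s a s') = 1"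
    and h_convex: "\<And>s. convex_on act_simplex (h s)"
    and h_closed: "\<And>s. closed_fun_on act_simplex (h s)"
    and rho: "is_distribution rho"
    and pol: "is_policy pol"
    and pol': "is_policy pol'"
  shows "Lunder P c h \<gamma> rho pol' (Vfun P c h \<gamma> pol)
         = (\<Sum>s\<in>UNIV. Vfun P c h \<gamma> pol s * rho s)
           - (\<Sum>s\<in>UNIV. eta P \<gamma> pol' rho s *
                (SUP p\<in>act_simplex. - psi P c h \<gamma> pol s p))"
proof -
  define V where "V = Vfun P c h \<gamma> pol"
  define Q where "Q = Qfun P c h \<gamma> pol"
  define E where "E = eta P \<gamma> pol' rho"
  define S where "S = (act_simplex :: (real^'a) set)"
  define ps where "ps = psi P c h \<gamma> pol"
  define k where "k s p = (\<Sum>a\<in>UNIV. Q s a * p $ a) - V s - h s (pol s)" for s p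
  have E0: "0 \<le> E s" for s unfolding E_def by (rule eta_nonneg[OF P_nonneg P_sum pol' gamma rho])
  have Qe: "Q s a = c s a + h s (pol s) + \<gamma> * (\<Sum>s1\<in>UNIV. P s a s1 * V s1)" for s a
    unfolding Q_def V_def by (rule Q_eq[OF P_nonneg P_sum pol gamma])
  have psk: "ps s p = h s p + k s p" for s p
    unfolding ps_def psi_def k_def Q_def V_def by simp
  have Sne: "S \<noteq> {}" using pol unfolding is_policy_def S_def by auto
  have Scp: "compact S" unfolding S_def by (rule simplex_compact)
  have "\<exists>p\<in>S. \<forall>q\<in>S. ps s p \<le> ps s q" for s
  proof (rule epi_min[OF _ Scp Sne])
    have eq: "{(p, t). p \<in> S \<and> ps s p \<le> t}
        = (\<lambda>z. (fst z, snd z - k s (fst z))) -` {(p, t). p \<in> S \<and> h s p \<le> t}"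
      by (auto simp: psk)
    have "closed {(p, t). p \<in> S \<and> h s p \<le> t}"
      using h_closed[of s] unfolding closed_fun_on_def S_def .
    moreover have "continuous (at z) (\<lambda>z. (fst z, snd z - k s (fst z)))" for z :: "(real^'a) \<times> real"
      unfolding k_def by (intro continuous_intros)
    ultimately show "closed {(p, t). p \<in> S \<and> ps s p \<le> t}"
      unfolding eq by (rule continuous_closed_vimage)
  qed
  then obtain pst where pst: "\<And>s. pst s \<in> S" "\<And>s q. q \<in> S \<Longrightarrow> ps s (pst s) \<le> ps s q"
    by metis
  define T where "T x s = (\<Sum>a\<in>UNIV. x s $ a * (Q s a - h s (pol s) - V s)) + E s * hbar h x s"
    for x :: "'s \<Rightarrow> real^'a" and s
  have Lag_eq: "Lag P c h \<gamma> rho pol' x V = (\<Sum>s\<in>UNIV. V s * rho s) + (\<Sum>s\<in>UNIV. T x s)" for x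
  proof -
    define W where "W s a = \<gamma> * (\<Sum>s1\<in>UNIV. P s a s1 * V s1)" for s a
    have Tp: "T x s = (\<Sum>a\<in>UNIV. c s a * x s $ a) + (\<Sum>a\<in>UNIV. x s $ a * W s a)
        - V s * (\<Sum>a\<in>UNIV. x s $ a) + E s * hbar h x s" for s
    proof -
      have pw: "x s $ a * (Q s a - h s (pol s) - V s) = c s a * x s $ a + x s $ a * W s a - V s * x s $ a" for a
      proof -
        have "Q s a - h s (pol s) - V s = c s a + W s a - V s" unfolding W_def by (simp add: Qe)
        then show ?thesis by (simp add: ring_distribs mult.commute)
      qed
      show ?thesis unfolding T_def pw by (simp add: sum.distrib sum_subtractf sum_distrib_left)
    qed
    have sw: "(\<Sum>s\<in>UNIV. V s * (\<gamma> * (\<Sum>s'\<in>UNIV. \<Sum>a\<in>UNIV. P s' a s * x s' $ a)))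
        = (\<Sum>s'\<in>UNIV. \<Sum>a\<in>UNIV. x s' $ a * W s' a)"
    proof -
      have "(\<Sum>s\<in>UNIV. V s * (\<gamma> * (\<Sum>s'\<in>UNIV. \<Sum>a\<in>UNIV. P s' a s * x s' $ a)))
          = (\<Sum>s\<in>UNIV. \<Sum>s'\<in>UNIV. \<Sum>a\<in>UNIV. \<gamma> * (P s' a s * V s) * x s' $ a)"
        by (simp add: sum_distrib_left mult_ac)
      also have "\<dots> = (\<Sum>s'\<in>UNIV. \<Sum>s\<in>UNIV. \<Sum>a\<in>UNIV. \<gamma> * (P s' a s * V s) * x s' $ a)"
        by (rule sum.swap)
      also have "\<dots> = (\<Sum>s'\<in>UNIV. \<Sum>a\<in>UNIV. \<Sum>s\<in>UNIV. \<gamma> * (P s' a s * V s) * x s' $ a)"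
        by (rule sum.cong[OF refl], rule sum.swap)
      also have "\<dots> = (\<Sum>s'\<in>UNIV. \<Sum>a\<in>UNIV. x s' $ a * W s' a)"
        unfolding W_def by (simp add: sum_distrib_left sum_distrib_right mult_ac)
      finally show ?thesis .
    qed
    have "Lag P c h \<gamma> rho pol' x V = (\<Sum>s\<in>UNIV. \<Sum>a\<in>UNIV. c s a * x s $ a)
        + (\<Sum>s\<in>UNIV. E s * hbar h x s) + ((\<Sum>s\<in>UNIV. V s * rho s)
        - (\<Sum>s\<in>UNIV. V s * (\<Sum>a\<in>UNIV. x s $ a))
        + (\<Sum>s\<in>UNIV. V s * (\<gamma> * (\<Sum>s'\<in>UNIV. \<Sum>a\<in>UNIV. P s' a s * x s' $ a))))"
      unfolding Lag_def cx_def flowT_def E_def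
      by (simp add: right_diff_distrib sum_subtractf sum.distrib algebra_simps)
    also have "\<dots> = (\<Sum>s\<in>UNIV. V s * rho s) + (\<Sum>s\<in>UNIV. T x s)"
      unfolding sw Tp by (simp add: sum.distrib sum_subtractf)
    finally show ?thesis .
  qed
  have Tu: "T x s = E s * ps s u" if xs: "x s = E s *\<^sub>R u" and u: "u \<in> S" for x s u
  proof -
    have su: "(\<Sum>a\<in>UNIV. u $ a) = 1" using u unfolding S_def act_simplex_def by simp
    have hb: "E s * hbar h x s = E s * h s u"
    proof (cases "E s = 0")
      case False
      have "(\<chi> a. x s $ a / (\<Sum>b\<in>UNIV. x s $ b)) = u"
        using False by (simp add: xs vec_eq_iff sum_distrib_left[symmetric] su)
      then show ?thesis unfolding hbar_def by simp
    qed simp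
    have pw: "x s $ a * (Q s a - h s (pol s) - V s)
        = E s * (u $ a * Q s a) - (E s * h s (pol s)) * u $ a - (E s * V s) * u $ a" for a
      using arith1[of "x s $ a" "E s" "u $ a" "Q s a" "h s (pol s)" "V s"] xs by simp
    have A: "(\<Sum>a\<in>UNIV. x s $ a * (Q s a - h s (pol s) - V s))
        = E s * (\<Sum>a\<in>UNIV. u $ a * Q s a) - E s * h s (pol s) - E s * V s"
      unfolding pw by (simp add: sum_subtractf sum_distrib_left[symmetric] su)
    have B: "ps s u = (\<Sum>a\<in>UNIV. u $ a * Q s a) - V s + h s u - h s (pol s)"
      unfolding ps_def psi_def Q_def V_def by (simp add: mult.commute)
    show ?thesis unfolding T_def hb A B
      by (rule arith2)
  qed
  define xst where "xst s = E s *\<^sub>R pst s" for s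
  have xstX: "xst \<in> Xset P \<gamma> rho pol'"
  proof -
    have "0 \<le> xst s $ a" for s a
      using pst(1)[of s] E0[of s] unfolding xst_def S_def act_simplex_def by simp
    moreover have "(\<Sum>a\<in>UNIV. xst s $ a) = E s" for s
      using pst(1)[of s] unfolding xst_def S_def act_simplex_def by (simp add: sum_distrib_left[symmetric])
    ultimately show ?thesis unfolding Xset_def E_def by simp
  qed
  have Txst: "T xst s = E s * ps s (pst s)" for s
    by (rule Tu[OF _ pst(1)]) (simp add: xst_def)
  have Tlow: "E s * ps s (pst s) \<le> T x s" if x: "x \<in> Xset P \<gamma> rho pol'" for x s
  proof -
    have xn: "\<And>a. 0 \<le> x s $ a" and xsum: "(\<Sum>a\<in>UNIV. x s $ a) = E s"
      using x unfolding Xset_def E_def by auto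
    have "\<exists>u\<in>S. x s = E s *\<^sub>R u"
    proof (cases "E s = 0")
      case True
      then have "\<forall>a\<in>UNIV. x s $ a = 0" using xsum xn by (simp add: sum_nonneg_eq_0_iff)
      then have "x s = E s *\<^sub>R pst s" using True by (simp add: vec_eq_iff)
      then show ?thesis using pst(1) by blast
    next
      case False
      then have Ep: "E s > 0" using E0[of s] by simp
      define u where "u = (1 / E s) *\<^sub>R x s"
      have "u \<in> S" unfolding S_def act_simplex_def u_def
        using Ep xn xsum by (simp add: sum_divide_distrib[symmetric])
      moreover have "x s = E s *\<^sub>R u" unfolding u_def using Ep by simp
      ultimately show ?thesis by blast
    qed
    then obtain u where u: "u \<in> S" "x s = E s *\<^sub>R u" by blast
    have "E s * ps s (pst s) \<le> E s * ps s u"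
      by (rule mult_left_mono[OF pst(2)[OF u(1)] E0])
    also have "\<dots> = T x s" using Tu[where x=x and s=s and u=u, OF u(2) u(1)] by simp
    finally show ?thesis .
  qed
  have L: "Lunder P c h \<gamma> rho pol' V = Lag P c h \<gamma> rho pol' xst V"
    unfolding Lunder_def
  proof (rule cInf_eq_minimum)
    show "Lag P c h \<gamma> rho pol' xst V \<in> (\<lambda>x. Lag P c h \<gamma> rho pol' x V) ` Xset P \<gamma> rho pol'"
      using xstX by blast
    fix y assume "y \<in> (\<lambda>x. Lag P c h \<gamma> rho pol' x V) ` Xset P \<gamma> rho pol'"
    then obtain x where x: "x \<in> Xset P \<gamma> rho pol'" and y: "y = Lag P c h \<gamma> rho pol' x V" by blast
    have "(\<Sum>s\<in>UNIV. T xst s) \<le> (\<Sum>s\<in>UNIV. T x s)"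
      by (rule sum_mono) (simp add: Txst Tlow[OF x])
    then show "Lag P c h \<gamma> rho pol' xst V \<le> y" unfolding y Lag_eq by simp
  qed
  have SUPe: "(SUP p\<in>S. - ps s p) = - ps s (pst s)" for s
  proof (rule cSup_eq_maximum)
    show "- ps s (pst s) \<in> (\<lambda>p. - ps s p) ` S" using pst(1) by blast
    fix y assume "y \<in> (\<lambda>p. - ps s p) ` S"
    then show "y \<le> - ps s (pst s)" using pst(2) by auto
  qed
  have "Lunder P c h \<gamma> rho pol' V = (\<Sum>s\<in>UNIV. V s * rho s) - (\<Sum>s\<in>UNIV. E s * (SUP p\<in>S. - ps s p))"
    unfolding L Lag_eq Txst SUPe by (simp add: sum_negf)
  then show ?thesis unfolding V_def E_def S_def ps_def .
qed

end
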